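(* Let $a=(a_2,\dots,a_k)$ be a tuple of nonnegative integers, not all zero, and let $2^p$ be the largest power of $2$ dividing all $a_i$. (1) If $\binom{|a|}{a}\equiv 1\pmod 2$, then there is a unique index $l$ such that $\binom{|a|-1}{\hat a_l}\equiv 1\pmod 2$; it is the unique index with $2^{p+1}\nmid a_l$. (2) If $\binom{|a|}{a}\equiv 0\pmod 2$ and $\binom{|a|-1}{\hat a_j}\equiv 1\pmod 2$ for some $j$, then there is a unique index $l\neq j$ with $\binom{|a|-1}{\hat a_l}\equiv 1\pmod 2$; it is the unique index other than $j$ with $2^{p+1}\nmid a_l$.
   Context: $|a|=a_2+\dots+a_k$ and $\binom{|a|}{a}=\frac{|a|!}{a_2!\cdots a_k!}$ is the multinomial coefficient. $\hat a_j=(a_2,\dots,a_j-1,\dots,a_k)$; the multinomial coefficient of a tuple with a negative entry is defined to be $0$. *)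

theory Defs
  imports Main
begin

definition multinom :: "(nat \<Rightarrow> nat) \<Rightarrow> nat set \<Rightarrow> nat" where
  "multinom a I = fact (\<Sum>i\<in>I. a i) div (\<Prod>i\<in>I. fact (a i))"

definition multinom_hat :: "(nat \<Rightarrow> nat) \<Rightarrow> nat set \<Rightarrow> nat \<Rightarrow> nat" where
  "multinom_hat a I j = (if a j = 0 then 0 else multinom (a(j := a j - 1)) I)"

end

theory Submission imports Defs begin

lemma aux4: "(X::nat) = A + B + B + C \<Longrightarrow> A mod 2 = A' mod 2 \<Longrightarrow> C mod 2 = C' mod 2 \<Longrightarrow> X mod 2 = (A'+C') mod 2"
  by presburger

lemma aux2: "(X::nat) = A + B \<Longrightarrow> even A \<Longrightarrow> B mod 2 = B' mod 2 \<Longrightarrow> X mod 2 = B' mod 2"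
  by presburger

lemma L1: "even ((2*M) choose (2*N+1))"
proof (cases M)
  case 0 then show ?thesis by simp
next
  case (Suc M')
  have eq: "Suc (2*M'+1) * ((2*M'+1) choose (2*N)) = ((Suc (2*M'+1)) choose (Suc (2*N))) * Suc (2*N)"
    by (rule Suc_times_binomial_eq)
  have s1: "Suc (2*M'+1) = 2*M" "Suc (2*N) = 2*N+1" using Suc by auto
  define X where "X = (2*M'+1) choose (2*N)"
  define Y where "Y = (2*M) choose (2*N+1)"
  have "2*M * X = Y * (2*N+1)" using eq unfolding X_def Y_def s1 .
  hence "even (Y * (2*N+1))" by (metis dvd_mult2 dvd_triv_left)
  hence "even Y" by simp
  then show ?thesis unfolding Y_def .
qed

lemma L2: "((2*M) choose (2*N)) mod 2 = (M choose N) mod 2"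
proof (induction M arbitrary: N)
  case 0 then show ?case by (cases N) auto
next
  case (Suc M)
  show ?case
  proof (cases N)
    case 0 then show ?thesis by simp
  next
    case (Suc N')
    have e1: "2 * Suc M = Suc (Suc (2*M))" by simp
    have e2: "2 * N = Suc (Suc (2*N'))" using Suc by simp
    have "(2 * Suc M choose 2 * N) = (2*M choose 2*N') + (2*M choose (2*N'+1)) + (2*M choose (2*N'+1)) + (2*M choose (2*(N'+1)))"
      unfolding e1 e2 by (simp add: binomial_Suc_Suc)
    from aux4[OF this Suc.IH Suc.IH]
    have "(2 * Suc M choose 2 * N) mod 2 = ((M choose N') + (M choose (N'+1))) mod 2" .
    moreover have "(Suc M choose N) = (M choose N') + (M choose (N'+1))" using Suc by simp
    ultimately show ?thesis by simp
  qed
qed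

lemma L3: "((2*M+1) choose (2*N)) mod 2 = (M choose N) mod 2"
proof (cases N)
  case 0 then show ?thesis by simp
next
  case (Suc N')
  have "((2*M+1) choose (2*N)) = (2*M choose (2*N'+1)) + (2*M choose 2*N)"
    using Suc by simp
  from aux2[OF this L1 L2] show ?thesis .
qed

lemma L4: "((2*M+1) choose (2*N+1)) mod 2 = (M choose N) mod 2"
proof -
  have "((2*M+1) choose (2*N+1)) = (2*M choose (2*N+1)) + (2*M choose 2*N)" by simp
  from aux2[OF this L1 L2] show ?thesis .
qed

lemma bits_half: "(\<forall>b. \<not>(bit (m::nat) b \<and> bit n b)) \<longleftrightarrow>
   \<not>(odd m \<and> odd n) \<and> (\<forall>b. \<not>(bit (m div 2) b \<and> bit (n div 2) b))"
proof -
  have "(\<forall>b. \<not>(bit m b \<and> bit n b)) \<longleftrightarrow> \<not>(bit m 0 \<and> bit n 0) \<and> (\<forall>b. \<not>(bit m (Suc b) \<and> bit n (Suc b)))"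
    by (metis not0_implies_Suc)
  then show ?thesis by (simp only: bit_0 bit_Suc)
qed

lemma binom_parity: "odd (((m::nat)+n) choose n) \<longleftrightarrow> (\<forall>b. \<not>(bit m b \<and> bit n b))"
proof (induction "m+n" arbitrary: m n rule: less_induct)
  case less
  show ?case
  proof (cases "m = 0 \<and> n = 0")
    case True then show ?thesis by simp
  next
    case False
    define m' where "m' = m div 2"
    define n' where "n' = n div 2"
    have lt: "m'+n' < m+n" using False unfolding m'_def n'_def by auto
    note IH = less(1)[OF lt]
    have hb: "(\<forall>b. \<not>(bit m b \<and> bit n b)) \<longleftrightarrow> \<not>(odd m \<and> odd n) \<and> (\<forall>b. \<not>(bit m' b \<and> bit n' b))"
      unfolding m'_def n'_def by (rule bits_half)
    have fin: "odd ((m+n) choose n) \<longleftrightarrow> (\<forall>b. \<not>(bit m b \<and> bit n b))"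
      if c: "((m+n) choose n) mod 2 = ((m'+n') choose n') mod 2" and nb: "\<not>(odd m \<and> odd n)"
    proof -
      have "odd ((m+n) choose n) \<longleftrightarrow> odd ((m'+n') choose n')"
        by (simp only: odd_iff_mod_2_eq_one c)
      then show ?thesis using IH hb nb by blast
    qed
    consider "odd m" "odd n" | "even m" "even n" | "odd m" "even n" | "even m" "odd n" by blast
    then show ?thesis
    proof cases
      case 1
      then have e1: "m+n = 2*(m'+n'+1)" and e2: "n = 2*n'+1" unfolding m'_def n'_def by presburger+
      have "even ((m+n) choose n)" by (subst e1, subst e2, rule L1)
      then show ?thesis using hb 1 by blast
    next
      case 2
      then have e1: "m+n = 2*(m'+n')" and e2: "n = 2*n'" unfolding m'_def n'_def by presburger+
      have "((m+n) choose n) mod 2 = ((m'+n') choose n') mod 2" by (subst e1, subst e2, rule L2)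
      then show ?thesis using fin 2 by blast
    next
      case 3
      then have e1: "m+n = 2*(m'+n')+1" and e2: "n = 2*n'" unfolding m'_def n'_def by presburger+
      have "((m+n) choose n) mod 2 = ((m'+n') choose n') mod 2" by (subst e1, subst e2, rule L3)
      then show ?thesis using fin 3 by blast
    next
      case 4
      then have e1: "m+n = 2*(m'+n')+1" and e2: "n = 2*n'+1" unfolding m'_def n'_def by presburger+
      have "((m+n) choose n) mod 2 = ((m'+n') choose n') mod 2" by (subst e1, subst e2, rule L4)
      then show ?thesis using fin 4 by blast
    qed
  qed
qed

lemma multinom_step:
  assumes "finite I" "y \<notin> I" "fact (sum a I) = multinom a I * (\<Prod>i\<in>I. fact (a i))"
  shows "multinom a (insert y I) = ((sum a I + a y) choose a y) * multinom a I"
    and "fact (sum a (insert y I)) = multinom a (insert y I) * (\<Prod>i\<in>insert y I. fact (a i))"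
proof -
  have "fact (sum a (insert y I)) = fact (a y + sum a I)" using assms by simp
  also have "\<dots> = fact (a y) * fact (sum a I) * ((sum a I + a y) choose a y)"
    using binomial_fact_lemma[of "a y" "a y + sum a I"] by (simp add: add.commute)
  also have "\<dots> = (((sum a I + a y) choose a y) * multinom a I) * (\<Prod>i\<in>insert y I. fact (a i))"
    using assms by simp
  finally have F: "fact (sum a (insert y I)) = (((sum a I + a y) choose a y) * multinom a I) * (\<Prod>i\<in>insert y I. fact (a i))" .
  have pos: "(\<Prod>i\<in>insert y I. fact (a i)) > (0::nat)"
    by (simp add: prod_pos)
  show m: "multinom a (insert y I) = ((sum a I + a y) choose a y) * multinom a I"
    unfolding multinom_def F using pos by simp
  show "fact (sum a (insert y I)) = multinom a (insert y I) * (\<Prod>i\<in>insert y I. fact (a i))"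
    using F m by simp
qed

lemma fact_sum_multinom:
  assumes "finite I"
  shows "fact (sum a I) = multinom a I * (\<Prod>i\<in>I. fact (a i))"
  using assms
proof (induction I rule: finite_induct)
  case empty
  show ?case by (simp add: multinom_def)
next
  case (insert y I)
  show ?case using multinom_step(2)[OF insert(1,2,3)] .
qed

lemma multinom_insert:
  assumes "finite I" "y \<notin> I"
  shows "multinom a (insert y I) = ((sum a I + a y) choose a y) * multinom a I"
  using multinom_step(1)[OF assms fact_sum_multinom[OF assms(1)]] .

definition D :: "(nat \<Rightarrow> nat) \<Rightarrow> nat set \<Rightarrow> bool" where
  "D a I \<longleftrightarrow> (\<forall>b. \<forall>i\<in>I. \<forall>j\<in>I. bit (a i) b \<longrightarrow> bit (a j) b \<longrightarrow> i = j)"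

lemma sum_bits:
  assumes "finite I" "D a I"
  shows "bit (sum a I) b \<longleftrightarrow> (\<exists>i\<in>I. bit (a i) b)"
  using assms
proof (induction I arbitrary: b rule: finite_induct)
  case empty then show ?case by simp
next
  case (insert x I)
  have DI: "D a I" using insert(4) unfolding D_def by blast
  note IH = insert.IH[OF DI]
  have disj: "\<not> bit (a x) n \<or> \<not> bit (sum a I) n" for n
    using IH insert(2,4) unfolding D_def by blast
  have "bit (sum a (insert x I)) b = bit (a x + sum a I) b" using insert by simp
  also have "\<dots> \<longleftrightarrow> bit (a x) b \<or> bit (sum a I) b" using bit_disjunctive_add_iff disj by blast
  finally show ?case using IH by auto
qed

lemma multinom_odd_iff:
  assumes "finite I"
  shows "odd (multinom a I) \<longleftrightarrow> D a I"
  using assms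
proof (induction I rule: finite_induct)
  case empty then show ?case by (simp add: multinom_def D_def)
next
  case (insert x I)
  have "odd (multinom a (insert x I)) \<longleftrightarrow> odd ((sum a I + a x) choose a x) \<and> odd (multinom a I)"
    using multinom_insert[OF insert(1,2)] by simp
  also have "\<dots> \<longleftrightarrow> (\<forall>b. \<not>(bit (sum a I) b \<and> bit (a x) b)) \<and> D a I"
    using binom_parity insert.IH by blast
  also have "\<dots> \<longleftrightarrow> D a (insert x I)"
  proof
    assume h: "(\<forall>b. \<not>(bit (sum a I) b \<and> bit (a x) b)) \<and> D a I"
    then have "\<forall>b. \<forall>i\<in>I. \<not>(bit (a i) b \<and> bit (a x) b)" using sum_bits[OF insert(1)] by blast
    then show "D a (insert x I)" using h unfolding D_def by blast
  next
    assume h: "D a (insert x I)"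
    then have DI: "D a I" unfolding D_def by blast
    have "\<forall>b. \<not>(bit (sum a I) b \<and> bit (a x) b)"
      using sum_bits[OF insert(1) DI] h insert(2) unfolding D_def by blast
    then show "(\<forall>b. \<not>(bit (sum a I) b \<and> bit (a x) b)) \<and> D a I" using DI by blast
  qed
  finally show ?case .
qed

lemma dvd_pow_Suc_iff: "(2::nat)^(Suc n) dvd x \<longleftrightarrow> even x \<and> 2^n dvd x div 2"
proof
  assume h: "2^(Suc n) dvd x"
  then obtain c where c: "x = 2 * (2^n * c)" by (auto simp: dvd_def)
  then show "even x \<and> 2^n dvd x div 2" by simp
next
  assume h: "even x \<and> 2^n dvd x div 2"
  then obtain c where "x div 2 = 2^n * c" by (auto simp: dvd_def)
  moreover have "x = 2 * (x div 2)" using h by simp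
  ultimately show "2^(Suc n) dvd x" by (metis dvd_triv_left mult.assoc power_Suc)
qed

lemma B1: "(2::nat)^n dvd x \<longleftrightarrow> (\<forall>b<n. \<not> bit x b)"
proof (induction n arbitrary: x)
  case 0 then show ?case by simp
next
  case (Suc n)
  have "(\<forall>b<Suc n. \<not> bit x b) \<longleftrightarrow> \<not> bit x 0 \<and> (\<forall>b<n. \<not> bit x (Suc b))"
    by (metis less_Suc_eq_0_disj Suc_less_eq zero_less_Suc)
  also have "\<dots> \<longleftrightarrow> even x \<and> (\<forall>b<n. \<not> bit (x div 2) b)" by (simp only: bit_0 bit_Suc not_not)
  also have "\<dots> \<longleftrightarrow> even x \<and> 2^n dvd x div 2" using Suc.IH by blast
  finally show ?case using dvd_pow_Suc_iff by blast
qed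

lemma B0: "(x::nat) \<noteq> 0 \<Longrightarrow> \<exists>t. bit x t \<and> (\<forall>b<t. \<not> bit x b)"
proof (induction x rule: less_induct)
  case (less x)
  show ?case
  proof (cases "odd x")
    case True then show ?thesis by (intro exI[of _ 0]) (simp add: bit_0)
  next
    case False
    then have "x div 2 \<noteq> 0" "x div 2 < x" using less(2) by auto
    then obtain t where t: "bit (x div 2) t" "\<forall>b<t. \<not> bit (x div 2) b" using less(1) by blast
    show ?thesis
    proof (intro exI[of _ "Suc t"] conjI allI impI)
      show "bit x (Suc t)" using t by (simp add: bit_Suc)
      fix b assume "b < Suc t"
      then show "\<not> bit x b" using t False by (cases b) (auto simp: bit_Suc bit_0)
    qed
  qed
qed

lemma B2: "bit (x::nat) t \<Longrightarrow> (\<forall>b<t. \<not> bit x b) \<Longrightarrow> bit (x - 1) b \<longleftrightarrow> (b < t \<or> (t < b \<and> bit x b))"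
proof (induction t arbitrary: x b)
  case 0
  then have ox: "odd x" by (simp add: bit_0)
  show ?case
  proof (cases b)
    case 0 then show ?thesis using ox by (simp add: bit_0)
  next
    case (Suc c)
    have "(x - 1) div 2 = x div 2" using ox by presburger
    then show ?thesis using Suc by (simp add: bit_Suc)
  qed
next
  case (Suc t)
  have ex: "even x" using Suc.prems(2) by (auto simp: bit_0)
  have x0: "x \<noteq> 0" proof
    assume "x = 0" then show False using Suc.prems(1) by simp
  qed
  have h1: "bit (x div 2) t" using Suc.prems(1) by (simp add: bit_Suc)
  have h2: "\<forall>b<t. \<not> bit (x div 2) b" using Suc.prems(2) by (auto simp: bit_Suc[symmetric])
  note IH = Suc.IH[OF h1 h2]
  show ?case
  proof (cases b)
    case 0
    have "odd (x - 1)" using ex x0 by presburger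
    then show ?thesis using 0 by (simp add: bit_0)
  next
    case (Suc c)
    have "(x - 1) div 2 = x div 2 - 1" using ex x0 by presburger
    then have "bit (x - 1) b \<longleftrightarrow> bit (x div 2 - 1) c" using Suc by (simp add: bit_Suc)
    also have "\<dots> \<longleftrightarrow> (c < t \<or> (t < c \<and> bit (x div 2) c))" by (rule IH)
    also have "\<dots> \<longleftrightarrow> (b < Suc t \<or> (Suc t < b \<and> bit x b))" using Suc by (simp add: bit_Suc)
    finally show ?thesis .
  qed
qed
lemma bit_nz: "bit (x::nat) n \<Longrightarrow> x \<noteq> 0"
proof
  assume "bit x n" "x = 0" then show False by simp
qed

lemma lowest_bit_gt:
  assumes "(x::nat) \<noteq> 0" "\<forall>c<p. \<not> bit x c" "\<not> bit x p"
  shows "bit (x - 1) p"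
proof -
  obtain t where t: "bit x t" "\<forall>b<t. \<not> bit x b" using B0[OF assms(1)] by blast
  have "\<not> t < p" using t assms(2) by blast
  moreover have "t \<noteq> p" using t assms(3) by blast
  ultimately have "p < t" by simp
  then show ?thesis using B2[OF t] by simp
qed

lemma P1:
  assumes D: "D a I" and lI: "l \<in> I" and bl: "bit (a l) p"
    and low: "\<forall>i\<in>I. \<forall>c<p. \<not> bit (a i) c" and l'I: "l' \<in> I"
  shows "(a l' \<noteq> 0 \<and> D (a(l' := a l' - 1)) I) \<longleftrightarrow> bit (a l') p"
proof
  assume h: "a l' \<noteq> 0 \<and> D (a(l' := a l' - 1)) I"
  show "bit (a l') p"
  proof (rule ccontr)
    assume nb: "\<not> bit (a l') p"
    have "bit (a l' - 1) p" using lowest_bit_gt[of "a l'" p] h nb low l'I by blast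
    moreover have "l \<noteq> l'" using nb bl by blast
    ultimately show False using h bl lI l'I unfolding D_def by (metis fun_upd_apply)
  qed
next
  assume b': "bit (a l') p"
  have ll: "l' = l" using D b' bl lI l'I unfolding D_def by blast
  have F: "bit (a l - 1) c \<longleftrightarrow> (c < p \<or> (p < c \<and> bit (a l) c))" for c
    using B2[OF bl] low lI by blast
  have a0: "a l \<noteq> 0" using bl using bit_nz by blast
  have "D (a(l := a l - 1)) I"
    unfolding D_def
  proof (intro allI ballI impI)
    fix b x y assume xI: "x \<in> I" and yI: "y \<in> I"
      and bx: "bit ((a(l := a l - 1)) x) b" and by': "bit ((a(l := a l - 1)) y) b"
    show "x = y"
    proof (cases "x = l")
      case True
      show ?thesis
      proof (rule ccontr)
        assume "x \<noteq> y"
        then have "bit (a y) b" "y \<noteq> l" using by' True by auto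
        moreover have "b < p \<or> (p < b \<and> bit (a l) b)" using bx True F by simp
        ultimately show False using low yI D lI unfolding D_def by blast
      qed
    next
      case False
      show ?thesis
      proof (cases "y = l")
        case True
        show ?thesis
        proof (rule ccontr)
          assume "x \<noteq> y"
          then have "bit (a x) b" "x \<noteq> l" using bx True by auto
          moreover have "b < p \<or> (p < b \<and> bit (a l) b)" using by' True F by simp
          ultimately show False using low xI D lI unfolding D_def by blast
        qed
      next
        case False
        then show ?thesis using \<open>x \<noteq> l\<close> bx by' D xI yI unfolding D_def by auto
      qed
    qed
  qed
  then show "a l' \<noteq> 0 \<and> D (a(l' := a l' - 1)) I" using ll a0 by simp
qed

lemma P2:
  assumes nD: "\<not> D a I" and jI: "j \<in> I" and aj: "a j \<noteq> 0" and Dj: "D (a(j := a j - 1)) I"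
    and low: "\<forall>i\<in>I. \<forall>c<p. \<not> bit (a i) c" and ex0: "\<exists>i\<in>I. bit (a i) p"
  shows "(\<exists>!l. l \<in> I \<and> l \<noteq> j \<and> bit (a l) p) \<and>
         (\<forall>l'\<in>I - {j}. (a l' \<noteq> 0 \<and> D (a(l' := a l' - 1)) I) \<longleftrightarrow> bit (a l') p)"
proof -
  obtain t where t: "bit (a j) t" "\<forall>b<t. \<not> bit (a j) b" using B0[OF aj] by blast
  have F2: "bit (a j - 1) c \<longleftrightarrow> (c < t \<or> (t < c \<and> bit (a j) c))" for c using B2[OF t] .
  have Dj': "\<And>c x y. x \<in> I \<Longrightarrow> y \<in> I \<Longrightarrow> bit ((a(j := a j - 1)) x) c \<Longrightarrow> bit ((a(j := a j - 1)) y) c \<Longrightarrow> x = y"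
    using Dj unfolding D_def by blast
  have claim1: "\<exists>i\<in>I. i \<noteq> j \<and> bit (a i) t"
  proof -
    obtain b i1 i2 where i: "i1 \<in> I" "i2 \<in> I" "bit (a i1) b" "bit (a i2) b" "i1 \<noteq> i2"
      using nD unfolding D_def by blast
    have "\<exists>i\<in>I. i \<noteq> j \<and> bit (a i) b \<and> bit (a j) b"
    proof (cases "i1 = j")
      case True then show ?thesis using i by (intro bexI[of _ i2]) auto
    next
      case False
      show ?thesis
      proof (cases "i2 = j")
        case True then show ?thesis using i by (intro bexI[of _ i1]) auto
      next
        case False
        then have False using Dj'[of i1 i2 b] i \<open>i1 \<noteq> j\<close> by auto
        then show ?thesis ..
      qed
    qed
    then obtain i where ii: "i \<in> I" "i \<noteq> j" "bit (a i) b" "bit (a j) b" by blast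
    have "\<not> b < t" using ii t by blast
    moreover have "\<not> t < b"
    proof
      assume "t < b"
      then have "bit (a j - 1) b" using F2 ii by blast
      then show False using Dj'[of i j b] ii jI by auto
    qed
    ultimately have "b = t" by simp
    then show ?thesis using ii by blast
  qed
  have claim2: "\<forall>i\<in>I. i \<noteq> j \<longrightarrow> (\<forall>c<t. \<not> bit (a i) c)"
  proof (intro ballI impI allI)
    fix i c assume "i \<in> I" "i \<noteq> j" "c < t"
    show "\<not> bit (a i) c"
    proof
      assume "bit (a i) c"
      moreover have "bit (a j - 1) c" using F2 \<open>c < t\<close> by blast
      ultimately show False using Dj'[of i j c] \<open>i \<in> I\<close> \<open>i \<noteq> j\<close> jI by auto
    qed
  qed
  have tp: "t = p"
  proof (rule ccontr)
    assume "t \<noteq> p"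
    then consider "p < t" | "t < p" by linarith
    then show False
    proof cases
      case 1
      obtain i0 where "i0 \<in> I" "bit (a i0) p" using ex0 by blast
      moreover have "i0 \<noteq> j" using 1 t \<open>bit (a i0) p\<close> by blast
      ultimately show False using claim2 1 by blast
    next
      case 2 then show False using low jI t by blast
    qed
  qed
  obtain l where l: "l \<in> I" "l \<noteq> j" "bit (a l) p" using claim1 tp by blast
  have uniq: "\<And>x. x \<in> I \<Longrightarrow> x \<noteq> j \<Longrightarrow> bit (a x) p \<Longrightarrow> x = l"
    using Dj'[of _ l p] l by auto
  have bjp: "bit (a j) p" using t tp by simp
  have F2': "bit (a j - 1) c \<longleftrightarrow> (c < p \<or> (p < c \<and> bit (a j) c))" for c using F2 tp by simp
  have F1: "bit (a l - 1) c \<longleftrightarrow> (c < p \<or> (p < c \<and> bit (a l) c))" for c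
    using B2[OF l(3)] low l(1) by blast
  have al0: "a l \<noteq> 0" using l(3) using bit_nz by blast
  have Dl: "D (a(l := a l - 1)) I"
    unfolding D_def
  proof (intro allI ballI impI)
    fix b x y assume xI: "x \<in> I" and yI: "y \<in> I"
      and bx: "bit ((a(l := a l - 1)) x) b" and by': "bit ((a(l := a l - 1)) y) b"
    show "x = y"
    proof (rule ccontr)
      assume xy: "x \<noteq> y"
      have gen: "False" if u: "u \<in> I" "u \<noteq> l" "bit (a u) b" and lb: "bit (a l - 1) b" for u
      proof -
        consider "b < p" | "p < b" "bit (a l) b" using F1 lb by blast
        then show False
        proof cases
          case 1 then show False using low u by blast
        next
          case 2
          show False
          proof (cases "u = j")
            case True
            then have "bit (a j - 1) b" using F2' 2 u by blast
            then show False using Dj'[of l j b] l jI 2 by auto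
          next
            case False
            then show False using Dj'[of l u b] l u 2 by auto
          qed
        qed
      qed
      show False
      proof (cases "x = l")
        case True
        then show False using gen[of y] xy bx by' yI by auto
      next
        case False
        show False
        proof (cases "y = l")
          case True
          then show False using gen[of x] xy bx by' xI False by auto
        next
          case ny: False
          have bx': "bit (a x) b" and by'': "bit (a y) b" using bx by' False ny by auto
          have both: False if "u \<in> I" "u \<noteq> j" "u \<noteq> l" "bit (a u) b" "bit (a j) b" for u
          proof -
            consider "b < p" | "b = p" | "p < b" by linarith
            then show False
            proof cases
              case 1 then show False using low that by blast
            next
              case 2 then show False using uniq that by blast
            next
              case 3
              then have "bit (a j - 1) b" using F2' that by blast
              then show False using Dj'[of u j b] that jI by auto
            qed
          qed
          show False
          proof (cases "x = j")
            case True
            then show False using both[of y] xy yI ny by'' bx' by auto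
          next
            case nxj: False
            show False
            proof (cases "y = j")
              case True
              then show False using both[of x] xy xI False bx' by'' by auto
            next
              case False
              then show False using Dj'[of x y b] nxj xI yI bx' by'' xy by auto
            qed
          qed
        qed
      qed
    qed
  qed
  show ?thesis
  proof (intro conjI ballI)
    show "\<exists>!l. l \<in> I \<and> l \<noteq> j \<and> bit (a l) p" using l uniq by blast
    fix l' assume l'I: "l' \<in> I - {j}"
    show "(a l' \<noteq> 0 \<and> D (a(l' := a l' - 1)) I) \<longleftrightarrow> bit (a l') p"
    proof
      assume h: "a l' \<noteq> 0 \<and> D (a(l' := a l' - 1)) I"
      show "bit (a l') p"
      proof (rule ccontr)
        assume nb: "\<not> bit (a l') p"
        have "bit (a l' - 1) p" using lowest_bit_gt[of "a l'" p] h nb low l'I by blast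
        moreover have "l' \<noteq> j" using l'I by blast
        ultimately show False using h bjp jI l'I unfolding D_def by (metis DiffD1 fun_upd_apply)
      qed
    next
      assume "bit (a l') p"
      then have "l' = l" using uniq l'I by blast
      then show "a l' \<noteq> 0 \<and> D (a(l' := a l' - 1)) I" using al0 Dl by simp
    qed
  qed
qed

theorem mainTheorem6:
  fixes a :: "nat \<Rightarrow> nat" and k p :: nat
  defines "I \<equiv> {2..k}"
  assumes nonzero: "\<exists>i\<in>I. a i \<noteq> 0"
    and p_div: "\<forall>i\<in>I. 2 ^ p dvd a i"
    and p_max: "\<not> (\<forall>i\<in>I. 2 ^ (p + 1) dvd a i)"
  shows "(odd (multinom a I) \<longrightarrow>
            (\<exists>!l. l \<in> I \<and> odd (multinom_hat a I l)) \<and>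
            (\<exists>!l. l \<in> I \<and> \<not> 2 ^ (p + 1) dvd a l) \<and>
            (\<forall>l\<in>I. odd (multinom_hat a I l) \<longleftrightarrow> \<not> 2 ^ (p + 1) dvd a l))
       \<and> (\<forall>j\<in>I. even (multinom a I) \<and> odd (multinom_hat a I j) \<longrightarrow>
            (\<exists>!l. l \<in> I \<and> l \<noteq> j \<and> odd (multinom_hat a I l)) \<and>
            (\<exists>!l. l \<in> I \<and> l \<noteq> j \<and> \<not> 2 ^ (p + 1) dvd a l) \<and>
            (\<forall>l\<in>I - {j}. odd (multinom_hat a I l) \<longleftrightarrow> \<not> 2 ^ (p + 1) dvd a l))"
proof -
  have fin: "finite I" unfolding I_def by simp
  have low: "\<forall>i\<in>I. \<forall>c<p. \<not> bit (a i) c" using p_div B1 by blast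
  have Z: "\<forall>i\<in>I. (\<not> 2^(p+1) dvd a i) \<longleftrightarrow> bit (a i) p"
  proof
    fix i assume iI: "i \<in> I"
    have "2^(p+1) dvd a i \<longleftrightarrow> (\<forall>b<p+1. \<not> bit (a i) b)" using B1 by blast
    also have "\<dots> \<longleftrightarrow> \<not> bit (a i) p" using low iI by (auto simp: less_Suc_eq)
    finally show "(\<not> 2^(p+1) dvd a i) \<longleftrightarrow> bit (a i) p" by blast
  qed
  have ex0: "\<exists>i\<in>I. bit (a i) p" using p_max Z by blast
  have hat: "\<forall>l\<in>I. odd (multinom_hat a I l) \<longleftrightarrow> (a l \<noteq> 0 \<and> D (a(l := a l - 1)) I)"
    by (simp add: multinom_hat_def multinom_odd_iff[OF fin])
  have part1: "odd (multinom a I) \<longrightarrow>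
            (\<exists>!l. l \<in> I \<and> odd (multinom_hat a I l)) \<and>
            (\<exists>!l. l \<in> I \<and> \<not> 2 ^ (p + 1) dvd a l) \<and>
            (\<forall>l\<in>I. odd (multinom_hat a I l) \<longleftrightarrow> \<not> 2 ^ (p + 1) dvd a l)"
  proof
    assume "odd (multinom a I)"
    then have DI: "D a I" using multinom_odd_iff[OF fin] by blast
    obtain l where l: "l \<in> I" "bit (a l) p" using ex0 by blast
    have iff: "\<forall>l'\<in>I. odd (multinom_hat a I l') \<longleftrightarrow> \<not> 2 ^ (p + 1) dvd a l'"
      using P1[OF DI l low] hat Z by blast
    have u: "\<exists>!l. l \<in> I \<and> \<not> 2 ^ (p + 1) dvd a l"
      using l Z DI unfolding D_def by blast
    have u2: "\<exists>!l. l \<in> I \<and> odd (multinom_hat a I l)"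
      using u iff by blast
    show "(\<exists>!l. l \<in> I \<and> odd (multinom_hat a I l)) \<and>
            (\<exists>!l. l \<in> I \<and> \<not> 2 ^ (p + 1) dvd a l) \<and>
            (\<forall>l\<in>I. odd (multinom_hat a I l) \<longleftrightarrow> \<not> 2 ^ (p + 1) dvd a l)"
      using u u2 iff by blast
  qed
  have part2: "\<forall>j\<in>I. even (multinom a I) \<and> odd (multinom_hat a I j) \<longrightarrow>
            (\<exists>!l. l \<in> I \<and> l \<noteq> j \<and> odd (multinom_hat a I l)) \<and>
            (\<exists>!l. l \<in> I \<and> l \<noteq> j \<and> \<not> 2 ^ (p + 1) dvd a l) \<and>
            (\<forall>l\<in>I - {j}. odd (multinom_hat a I l) \<longleftrightarrow> \<not> 2 ^ (p + 1) dvd a l)"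
  proof (intro ballI impI)
    fix j assume jI: "j \<in> I" and h: "even (multinom a I) \<and> odd (multinom_hat a I j)"
    have nD: "\<not> D a I" using h multinom_odd_iff[OF fin] by blast
    have hj: "a j \<noteq> 0 \<and> D (a(j := a j - 1)) I" using h hat jI by blast
    note R = P2[OF nD jI conjunct1[OF hj] conjunct2[OF hj] low ex0]
    have iff: "\<forall>l\<in>I - {j}. odd (multinom_hat a I l) \<longleftrightarrow> \<not> 2 ^ (p + 1) dvd a l"
      using R hat Z by blast
    have u: "\<exists>!l. l \<in> I \<and> l \<noteq> j \<and> \<not> 2 ^ (p + 1) dvd a l"
    proof -
      have "\<And>l. (l \<in> I \<and> l \<noteq> j \<and> \<not> 2 ^ (p + 1) dvd a l) \<longleftrightarrow> (l \<in> I \<and> l \<noteq> j \<and> bit (a l) p)"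
        using Z by blast
      then show ?thesis using R by simp
    qed
    have u2: "\<exists>!l. l \<in> I \<and> l \<noteq> j \<and> odd (multinom_hat a I l)"
    proof -
      have "\<And>l. (l \<in> I \<and> l \<noteq> j \<and> odd (multinom_hat a I l)) \<longleftrightarrow> (l \<in> I \<and> l \<noteq> j \<and> \<not> 2 ^ (p + 1) dvd a l)"
        using iff by blast
      then show ?thesis using u by simp
    qed
    show "(\<exists>!l. l \<in> I \<and> l \<noteq> j \<and> odd (multinom_hat a I l)) \<and>
            (\<exists>!l. l \<in> I \<and> l \<noteq> j \<and> \<not> 2 ^ (p + 1) dvd a l) \<and>
            (\<forall>l\<in>I - {j}. odd (multinom_hat a I l) \<longleftrightarrow> \<not> 2 ^ (p + 1) dvd a l)"
      using u u2 iff by blast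
  qed
  show ?thesis using part1 part2 by blast
qed

end
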